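(* Let $G=(V,E)$ be a connected simple undirected graph with $V=\{1,\dots,n\}$, let $c\in\mathbb{R}^n$ be a vector with all components strictly positive, and let $\rho>0$. Then there exist strictly positive edge weights $w_{ij}>0$, $\{i,j\}\in E$, such that the weighted adjacency matrix $A$ satisfies $Ac=\rho\,c$ (i.e. $c$ is an eigenvector centrality vector of $G$ for some positive weighting) if and only if $$\sum_{j\in S}c_j^2=\sum_{j\in N(S)}c_j^2\quad\text{for every } S\in\mathcal{S}_1,$$ and $$\sum_{j\in S}c_j^2<\sum_{j\in N(S)}c_j^2\quad\text{for every } S\in\mathcal{S}_2.$$
   Context: For positive edge weights $w_{ij}=w_{ji}$ ($\{i,j\}\in E$), the weighted adjacency matrix $A\in\mathbb{R}^{n\times n}$ has $a_{ij}=w_{ij}$ if $\{i,j\}\in E$ and $a_{ij}=0$ otherwise. For $S\subseteq V$, the external neighborhood is $N(S)=\{j\in V\setminus S:\ \exists\, i\in S \text{ with } \{i,j\}\in E\}$. A set $S\subseteq V$ is stable if no two elements of $S$ are joined by an edge. $\mathcal{S}_1$ is the family of nonempty stable sets $S\subseteq V$ such that there is no edge $\{k,\ell\}\in E$ with $k\notin S$ and $\ell\notin S$; $\mathcal{S}_2$ is the family of nonempty stable sets $S\subseteq V$ such that there exists an edge $\{k,\ell\}\in E$ with $k\notin S$ and $\ell\notin S$. *)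

theory Defs
  imports Complex_Main
begin

definition simple_graph :: "nat \<Rightarrow> nat set set \<Rightarrow> bool" where
  "simple_graph n E \<longleftrightarrow> (\<forall>e\<in>E. \<exists>i j. e = {i, j} \<and> i \<noteq> j \<and> i \<in> {1..n} \<and> j \<in> {1..n})"

definition adj :: "nat set set \<Rightarrow> nat \<Rightarrow> nat \<Rightarrow> bool" where
  "adj E i j \<longleftrightarrow> {i, j} \<in> E"

definition connected_graph :: "nat \<Rightarrow> nat set set \<Rightarrow> bool" where
  "connected_graph n E \<longleftrightarrow> {1..n} \<noteq> {} \<and>
     (\<forall>i\<in>{1..n}. \<forall>j\<in>{1..n}. (i, j) \<in> {(a, b). adj E a b}\<^sup>*)"

definition wadj :: "nat set set \<Rightarrow> (nat set \<Rightarrow> real) \<Rightarrow> nat \<Rightarrow> nat \<Rightarrow> real" where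
  "wadj E w i j = (if {i, j} \<in> E then w {i, j} else 0)"

definition ext_nbhd :: "nat \<Rightarrow> nat set set \<Rightarrow> nat set \<Rightarrow> nat set" where
  "ext_nbhd n E S = {j \<in> {1..n} - S. \<exists>i\<in>S. {i, j} \<in> E}"

definition stable :: "nat set set \<Rightarrow> nat set \<Rightarrow> bool" where
  "stable E S \<longleftrightarrow> (\<forall>i\<in>S. \<forall>j\<in>S. {i, j} \<notin> E)"

definition S1 :: "nat \<Rightarrow> nat set set \<Rightarrow> nat set set" where
  "S1 n E = {S. S \<subseteq> {1..n} \<and> S \<noteq> {} \<and> stable E S \<and>
     \<not> (\<exists>k l. {k, l} \<in> E \<and> k \<notin> S \<and> l \<notin> S)}"

definition S2 :: "nat \<Rightarrow> nat set set \<Rightarrow> nat set set" where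
  "S2 n E = {S. S \<subseteq> {1..n} \<and> S \<noteq> {} \<and> stable E S \<and>
     (\<exists>k l. {k, l} \<in> E \<and> k \<notin> S \<and> l \<notin> S)}"

end

theory Submission
  imports Defs "HOL-Analysis.Analysis"
begin


definition dsum :: "nat set set \<Rightarrow> (nat set \<Rightarrow> real) \<Rightarrow> nat \<Rightarrow> real" where
  "dsum E x i = (\<Sum>e\<in>{e\<in>E. i \<in> e}. x e)"

lemma sg_finite: "simple_graph n E \<Longrightarrow> finite E"
proof -
  assume "simple_graph n E"
  then have "E \<subseteq> Pow {1..n}" unfolding simple_graph_def by fastforce
  then show ?thesis by (meson finite_Pow_iff finite_atLeastAtMost finite_subset)
qed

lemma sg_edge: "simple_graph n E \<Longrightarrow> e \<in> E \<Longrightarrow> \<exists>i j. e = {i, j} \<and> i \<noteq> j \<and> i \<in> {1..n} \<and> j \<in> {1..n}"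
  unfolding simple_graph_def by blast

lemma sg_edge2: "simple_graph n E \<Longrightarrow> {u, v} \<in> E \<Longrightarrow> u \<noteq> v \<and> u \<in> {1..n} \<and> v \<in> {1..n}"
  unfolding simple_graph_def by (smt (verit) doubleton_eq_iff)

lemma sumS:
  assumes "finite S" "finite E"
  shows "(\<Sum>i\<in>S. dsum E x i) = (\<Sum>e\<in>E. real (card {i\<in>S. i \<in> e}) * x e)"
proof -
  have "(\<Sum>i\<in>S. dsum E x i) = (\<Sum>i\<in>S. \<Sum>e\<in>E. if i \<in> e then x e else 0)"
    unfolding dsum_def using assms by (simp add: sum.inter_filter)
  also have "\<dots> = (\<Sum>e\<in>E. \<Sum>i\<in>S. if i \<in> e then x e else 0)" by (rule sum.swap)
  also have "\<dots> = (\<Sum>e\<in>E. real (card {i\<in>S. i \<in> e}) * x e)"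
  proof (rule sum.cong[OF refl])
    fix e
    have "(\<Sum>i\<in>S. if i \<in> e then x e else 0) = (\<Sum>i\<in>{i\<in>S. i \<in> e}. x e)"
      using assms by (subst sum.inter_filter) auto
    then show "(\<Sum>i\<in>S. if i \<in> e then x e else 0) = real (card {i\<in>S. i \<in> e}) * x e" by simp
  qed
  finally show ?thesis .
qed

lemma sumH:
  assumes "finite A" "finite E"
  shows "(\<Sum>i\<in>A. h i * dsum E x i) = (\<Sum>e\<in>E. x e * (\<Sum>i\<in>{i\<in>A. i \<in> e}. h i))"
proof -
  have "(\<Sum>i\<in>A. h i * dsum E x i) = (\<Sum>i\<in>A. \<Sum>e\<in>E. if i \<in> e then h i * x e else 0)"
  proof (rule sum.cong[OF refl])
    fix i
    have "dsum E x i = (\<Sum>e\<in>E. if i \<in> e then x e else 0)"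
      unfolding dsum_def using assms by (simp add: sum.inter_filter)
    then show "h i * dsum E x i = (\<Sum>e\<in>E. if i \<in> e then h i * x e else 0)"
      by (simp add: sum_distrib_left if_distrib cong: if_cong)
  qed
  also have "\<dots> = (\<Sum>e\<in>E. \<Sum>i\<in>A. if i \<in> e then h i * x e else 0)" by (rule sum.swap)
  also have "\<dots> = (\<Sum>e\<in>E. \<Sum>i\<in>{i\<in>A. i \<in> e}. h i * x e)"
    using assms by (simp add: sum.inter_filter)
  also have "\<dots> = (\<Sum>e\<in>E. x e * (\<Sum>i\<in>{i\<in>A. i \<in> e}. h i))"
    by (simp add: sum_distrib_left mult.commute)
  finally show ?thesis .
qed

lemma cardcases:
  assumes sg: "simple_graph n E" and st: "stable E S" and e: "e \<in> E"
  shows "(card {i\<in>S. i \<in> e} = 1 \<and> card {i\<in>ext_nbhd n E S. i \<in> e} = 1) \<or> card {i\<in>S. i \<in> e} = 0"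
proof -
  obtain p q where pq: "e = {p, q}" "p \<noteq> q" "p \<in> {1..n}" "q \<in> {1..n}" using sg_edge[OF sg e] by blast
  have NS: "ext_nbhd n E S \<inter> S = {}" unfolding ext_nbhd_def by auto
  show ?thesis
  proof (cases "p \<in> S")
    case True
    then have "q \<notin> S" using st e pq unfolding stable_def by blast
    moreover have "q \<in> ext_nbhd n E S" unfolding ext_nbhd_def using True pq e \<open>q \<notin> S\<close> by blast
    moreover have "p \<notin> ext_nbhd n E S" using NS True by blast
    ultimately have "{i\<in>S. i \<in> e} = {p}" "{i\<in>ext_nbhd n E S. i \<in> e} = {q}"
      using True pq by auto
    then show ?thesis by simp
  next
    case False
    show ?thesis
    proof (cases "q \<in> S")
      case True
      then have "p \<notin> S" using st e pq unfolding stable_def by (metis insert_commute)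
      moreover have "{q, p} \<in> E" using pq e by (simp add: insert_commute)
      then have "p \<in> ext_nbhd n E S" unfolding ext_nbhd_def using True pq \<open>p \<notin> S\<close>
        by blast
      moreover have "q \<notin> ext_nbhd n E S" using NS True by blast
      ultimately have "{i\<in>S. i \<in> e} = {q}" "{i\<in>ext_nbhd n E S. i \<in> e} = {p}"
        using True pq by auto
      then show ?thesis by simp
    next
      case False
      then have "{i\<in>S. i \<in> e} = {}" using \<open>p \<notin> S\<close> pq by auto
      then show ?thesis by (metis card.empty)
    qed
  qed
qed



lemma layer:
  fixes b :: "nat \<Rightarrow> real"
  assumes sg: "simple_graph n E" and b0: "\<forall>i\<in>{1..n}. b i \<ge> 0"
    and hall: "\<forall>S. S \<subseteq> {1..n} \<longrightarrow> S \<noteq> {} \<longrightarrow> stable E S \<longrightarrow> sum b S \<le> sum b (ext_nbhd n E S)"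
  shows "\<forall>y. (\<forall>u v. {u, v} \<in> E \<longrightarrow> y u + y v \<ge> 0) \<longrightarrow> card {i\<in>{1..n}. y i \<noteq> 0} = k
            \<longrightarrow> 0 \<le> (\<Sum>i\<in>{1..n}. b i * y i)"
proof (induction k rule: less_induct)
  case (less k)
  show ?case
  proof (intro allI impI)
    fix y :: "nat \<Rightarrow> real"
    assume ey: "\<forall>u v. {u, v} \<in> E \<longrightarrow> y u + y v \<ge> 0" and ck: "card {i\<in>{1..n}. y i \<noteq> 0} = k"
    define Z where "Z = {i\<in>{1..n}. y i \<noteq> 0}"
    have fZ: "finite Z" unfolding Z_def by simp
    show "0 \<le> (\<Sum>i\<in>{1..n}. b i * y i)"
    proof (cases "Z = {}")
      case True
      then have "\<forall>i\<in>{1..n}. y i = 0" unfolding Z_def by auto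
      then show ?thesis by simp
    next
      case False
      define t where "t = Min ((\<lambda>i. \<bar>y i\<bar>) ` Z)"
      have tin: "t \<in> (\<lambda>i. \<bar>y i\<bar>) ` Z" unfolding t_def using fZ False by (intro Min_in) auto
      then obtain i0 where i0: "i0 \<in> Z" "\<bar>y i0\<bar> = t" by auto
      have tpos: "t > 0" using i0 unfolding Z_def by auto
      have tle: "\<And>i. i \<in> Z \<Longrightarrow> t \<le> \<bar>y i\<bar>" unfolding t_def using fZ by (intro Min_le) auto
      define y' where "y' = (\<lambda>i. if y i > 0 then y i - t else if y i < 0 then y i + t else 0)"
      have ey': "\<forall>u v. {u, v} \<in> E \<longrightarrow> y' u + y' v \<ge> 0"
      proof (intro allI impI)
        fix u v assume uv: "{u, v} \<in> E"
        have s: "y u + y v \<ge> 0" using ey uv by blast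
        have uvV: "u \<in> {1..n}" "v \<in> {1..n}" using sg_edge2[OF sg uv] by auto
        have "y u \<noteq> 0 \<Longrightarrow> t \<le> \<bar>y u\<bar>" "y v \<noteq> 0 \<Longrightarrow> t \<le> \<bar>y v\<bar>"
          using tle uvV unfolding Z_def by auto
        then show "y' u + y' v \<ge> 0" unfolding y'_def using s by (auto split: if_splits)
      qed
      have Z'sub: "{i\<in>{1..n}. y' i \<noteq> 0} \<subseteq> Z - {i0}"
        unfolding Z_def y'_def using i0 by (auto split: if_splits)
      have "card {i\<in>{1..n}. y' i \<noteq> 0} \<le> card (Z - {i0})"
        using Z'sub fZ by (intro card_mono) auto
      also have "\<dots> < card Z" using fZ i0 by (meson card_Diff1_less)
      finally have lt: "card {i\<in>{1..n}. y' i \<noteq> 0} < k" using ck Z_def by simp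
      have IH: "0 \<le> (\<Sum>i\<in>{1..n}. b i * y' i)" using less lt ey' by blast
      define S where "S = {i\<in>{1..n}. y i < 0}"
      define T where "T = {i\<in>{1..n}. y i > 0}"
      have dec: "(\<Sum>i\<in>{1..n}. b i * y i) = (\<Sum>i\<in>{1..n}. b i * y' i) + t * sum b T - t * sum b S"
      proof -
        have "(\<Sum>i\<in>{1..n}. b i * y i) = (\<Sum>i\<in>{1..n}. b i * y' i + t * (if y i > 0 then b i else 0)
                  - t * (if y i < 0 then b i else 0))"
          unfolding y'_def by (intro sum.cong) (auto simp: algebra_simps)
        also have "\<dots> = (\<Sum>i\<in>{1..n}. b i * y' i) + t * (\<Sum>i\<in>{1..n}. if y i > 0 then b i else 0)
                  - t * (\<Sum>i\<in>{1..n}. if y i < 0 then b i else 0)"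
          by (simp add: sum.distrib sum_subtractf sum_distrib_left)
        also have "\<dots> = (\<Sum>i\<in>{1..n}. b i * y' i) + t * sum b T - t * sum b S"
          unfolding S_def T_def by (simp only: sum.inter_filter[OF finite_atLeastAtMost])
        finally show ?thesis .
      qed
      have ST: "sum b S \<le> sum b T"
      proof (cases "S = {}")
        case True
        have "0 \<le> sum b T" using b0 unfolding T_def by (intro sum_nonneg) auto
        then show ?thesis using True by simp
      next
        case False
        have st: "stable E S" unfolding stable_def S_def
        proof (intro ballI)
          fix i j assume "i \<in> {i \<in> {1..n}. y i < 0}" "j \<in> {i \<in> {1..n}. y i < 0}"
          then show "{i, j} \<notin> E" using ey by force
        qed
        have "sum b S \<le> sum b (ext_nbhd n E S)" using hall st False by (simp add: S_def subset_iff)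
        also have "\<dots> \<le> sum b T"
        proof (rule sum_mono2)
          show "finite T" unfolding T_def by simp
          show "ext_nbhd n E S \<subseteq> T"
          proof
            fix j assume "j \<in> ext_nbhd n E S"
            then obtain i where "j \<in> {1..n}" "i \<in> S" "{i, j} \<in> E" unfolding ext_nbhd_def by auto
            then show "j \<in> T" using ey unfolding S_def T_def by force
          qed
          show "\<And>a. a \<in> T - ext_nbhd n E S \<Longrightarrow> 0 \<le> b a" using b0 unfolding T_def by auto
        qed
        finally show ?thesis .
      qed
      have "0 \<le> t * (sum b T - sum b S)" using tpos ST by simp
      then show ?thesis using dec IH by (simp add: algebra_simps)
    qed
  qed
qed

lemma layer2:
  fixes b y :: "nat \<Rightarrow> real"
  assumes sg: "simple_graph n E" and b0: "\<forall>i\<in>{1..n}. b i \<ge> 0"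
    and hall: "\<forall>S. S \<subseteq> {1..n} \<longrightarrow> S \<noteq> {} \<longrightarrow> stable E S \<longrightarrow> sum b S \<le> sum b (ext_nbhd n E S)"
    and ey: "\<forall>u v. {u, v} \<in> E \<longrightarrow> y u + y v \<ge> 0"
  shows "0 \<le> (\<Sum>i\<in>{1..n}. b i * y i)"
  using layer[OF sg b0 hall] ey by blast

lemma conn_edge:
  assumes sg: "simple_graph n E" and cg: "connected_graph n E" and S: "S \<in> S2 n E"
  shows "\<exists>a b. {a, b} \<in> E \<and> a \<in> ext_nbhd n E S \<and> b \<notin> S"
proof (rule ccontr)
  assume "\<not> ?thesis"
  then have H: "\<And>a b. {a, b} \<in> E \<Longrightarrow> a \<in> ext_nbhd n E S \<Longrightarrow> b \<in> S" by blast
  obtain k l where kl: "{k, l} \<in> E" "k \<notin> S" "l \<notin> S" using S unfolding S2_def by blast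
  obtain s where s: "s \<in> S" using S unfolding S2_def by blast
  have SV: "S \<subseteq> {1..n}" using S unfolding S2_def by blast
  have kV: "k \<in> {1..n}" using sg_edge2[OF sg kl(1)] by auto
  have "(k, s) \<in> {(a, b). adj E a b}\<^sup>*" using cg kV s SV unfolding connected_graph_def by blast
  then have "s \<notin> S \<and> s \<notin> ext_nbhd n E S"
  proof (induction rule: rtrancl_induct)
    case base
    have "k \<notin> ext_nbhd n E S" using H kl by blast
    then show ?case using kl by blast
  next
    case (step z z')
    have e: "{z, z'} \<in> E" using step(2) unfolding adj_def by simp
    have zV: "z \<in> {1..n}" using sg_edge2[OF sg e] by auto
    have e': "{z', z} \<in> E" using e by (simp add: insert_commute)
    have "z' \<notin> S"
    proof
      assume "z' \<in> S"
      then have "z \<in> ext_nbhd n E S" unfolding ext_nbhd_def using zV step(3) e' by blast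
      then show False using step(3) by blast
    qed
    moreover have "z' \<notin> ext_nbhd n E S" using H e' step(3) by blast
    ultimately show ?case by blast
  qed
  then show False using s by blast
qed

lemma conv:
  assumes sg: "simple_graph n E" and i: "i \<in> {1..n}"
  shows "(\<Sum>j=1..n. wadj E w i j * c j) * c i = dsum E (\<lambda>e. w e * prod c e) i"
proof -
  have "(\<Sum>j=1..n. wadj E w i j * c j) * c i = (\<Sum>j\<in>{1..n}. if {i, j} \<in> E then w {i, j} * c j * c i else 0)"
    unfolding wadj_def sum_distrib_right by (intro sum.cong) auto
  also have "\<dots> = (\<Sum>j\<in>{j\<in>{1..n}. {i, j} \<in> E}. w {i, j} * c j * c i)"
    by (simp only: sum.inter_filter[OF finite_atLeastAtMost])
  also have "\<dots> = (\<Sum>j\<in>{j\<in>{1..n}. {i, j} \<in> E}. w {i, j} * prod c {i, j})"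
  proof (rule sum.cong[OF refl])
    fix j assume "j \<in> {j\<in>{1..n}. {i, j} \<in> E}"
    then have "i \<noteq> j" using sg_edge2[OF sg] by blast
    then show "w {i, j} * c j * c i = w {i, j} * prod c {i, j}" by simp
  qed
  also have "\<dots> = (\<Sum>e\<in>(\<lambda>j. {i, j}) ` {j\<in>{1..n}. {i, j} \<in> E}. w e * prod c e)"
  proof (rule sum.reindex[symmetric, unfolded comp_def])
    show "inj_on (\<lambda>j. {i, j}) {j\<in>{1..n}. {i, j} \<in> E}"
    proof (rule inj_onI)
      fix j j' assume "j \<in> {j\<in>{1..n}. {i, j} \<in> E}" "j' \<in> {j\<in>{1..n}. {i, j} \<in> E}" "{i, j} = {i, j'}"
      moreover have "i \<noteq> j" "i \<noteq> j'" using calculation sg_edge2[OF sg] by blast+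
      ultimately show "j = j'" by (metis doubleton_eq_iff)
    qed
  qed
  also have "(\<lambda>j. {i, j}) ` {j\<in>{1..n}. {i, j} \<in> E} = {e\<in>E. i \<in> e}"
  proof
    show "(\<lambda>j. {i, j}) ` {j\<in>{1..n}. {i, j} \<in> E} \<subseteq> {e\<in>E. i \<in> e}" by auto
    show "{e\<in>E. i \<in> e} \<subseteq> (\<lambda>j. {i, j}) ` {j\<in>{1..n}. {i, j} \<in> E}"
    proof
      fix e assume e: "e \<in> {e\<in>E. i \<in> e}"
      then obtain p q where pq: "e = {p, q}" "p \<noteq> q" "p \<in> {1..n}" "q \<in> {1..n}"
        using sg_edge[OF sg] by blast
      show "e \<in> (\<lambda>j. {i, j}) ` {j\<in>{1..n}. {i, j} \<in> E}"
      proof (cases "i = p")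
        case True then show ?thesis using e pq by auto
      next
        case False then have "i = q" using e pq by auto
        then show ?thesis using e pq by (auto simp: insert_commute intro!: image_eqI[of _ _ p])
      qed
    qed
  qed
  finally show ?thesis unfolding dsum_def by simp
qed



lemma cmp: fixes S :: "'a \<Rightarrow> real set" assumes "\<And>i. compact (S i)"
  shows "compact (PiE UNIV S)"
proof -
  have "compactin (product_topology (\<lambda>_. euclideanreal) UNIV) (PiE UNIV S)"
    using assms by (simp add: compactin_PiE)
  then show ?thesis by (simp add: euclidean_product_topology)
qed

lemma dsum_upd:
  assumes "finite E" "e \<in> E"
  shows "dsum E (x(e := x e + t)) i = dsum E x i + (if i \<in> e then t else 0)"
proof -
  have "x(e := x e + t) = (\<lambda>e'. x e' + (if e' = e then t else 0))" by auto
  then have "dsum E (x(e := x e + t)) i = dsum E x i + (\<Sum>e'\<in>{e'\<in>E. i \<in> e'}. if e' = e then t else 0)"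
    unfolding dsum_def by (simp add: sum.distrib)
  also have "(\<Sum>e'\<in>{e'\<in>E. i \<in> e'}. if e' = e then t else 0) = (if i \<in> e then t else 0)"
    using assms by (simp add: sum.delta)
  finally show ?thesis .
qed

lemma core:
  fixes b :: "nat \<Rightarrow> real"
  assumes sg: "simple_graph n E" and bpos: "\<forall>i\<in>{1..n}. b i > 0"
    and hall: "\<forall>S. S \<subseteq> {1..n} \<longrightarrow> S \<noteq> {} \<longrightarrow> stable E S \<longrightarrow> sum b S \<le> sum b (ext_nbhd n E S)"
  shows "\<exists>x. (\<forall>e\<in>E. x e \<ge> 0) \<and> (\<forall>i\<in>{1..n}. dsum E x i = b i)"
proof -
  have fE: "finite E" using sg_finite[OF sg] .
  define V where "V = {1..n}"
  define B where "B = sum b V + 1"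
  have bleB: "\<And>i. i \<in> V \<Longrightarrow> b i < B"
  proof -
    fix i assume "i \<in> V"
    then have "b i \<le> sum b V" using bpos unfolding V_def by (intro member_le_sum) (auto simp: less_imp_le)
    then show "b i < B" unfolding B_def by simp
  qed
  have Bpos: "B > 0" unfolding B_def V_def using bpos by (smt (verit) sum_nonneg)
  define Sb where "Sb = (\<lambda>e. if e \<in> E then {0..B} else {0::real})"
  define X where "X = PiE UNIV Sb"
  have memX: "\<And>x. x \<in> X \<longleftrightarrow> (\<forall>e. x e \<in> Sb e)" unfolding X_def by (simp add: PiE_iff)
  define F where "F = (\<lambda>x. \<Sum>i\<in>V. (dsum E x i - b i)^2)"
  have "compact X" unfolding X_def Sb_def by (rule cmp) auto
  moreover have "X \<noteq> {}" using memX[of "\<lambda>_. 0"] Bpos unfolding Sb_def by auto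
  moreover have "continuous_on X F" unfolding F_def dsum_def
    by (intro continuous_intros continuous_on_subset[OF continuous_on_product_coordinates]) auto
  ultimately obtain x where xX: "x \<in> X" and xmin: "\<And>z. z \<in> X \<Longrightarrow> F x \<le> F z"
    using continuous_attains_inf[of X F] by blast
  have x0: "0 \<le> x e \<and> x e \<le> B" if "e \<in> E" for e
  proof -
    have "x e \<in> Sb e" using xX memX by blast
    then show ?thesis using that unfolding Sb_def by simp
  qed
  define r where "r = (\<lambda>i. dsum E x i - b i)"
  have pert: "F (x(e := x e + t)) = F x + 2 * t * (r u + r v) + 2 * t^2"
    if e: "e \<in> E" "e = {u, v}" "u \<noteq> v" "u \<in> V" "v \<in> V" for e u v t
  proof -
    have "F (x(e := x e + t)) = (\<Sum>i\<in>V. (r i + (if i \<in> e then t else 0))^2)"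
      unfolding F_def r_def using dsum_upd[OF fE e(1)] by (simp add: algebra_simps)
    also have "\<dots> = (\<Sum>i\<in>V. (r i)^2 + (if i \<in> e then 2 * t * r i + t^2 else 0))"
      by (intro sum.cong) (auto simp: power2_eq_square algebra_simps)
    also have "\<dots> = F x + (\<Sum>i\<in>V. if i \<in> e then 2 * t * r i + t^2 else 0)"
      unfolding F_def r_def by (simp add: sum.distrib)
    also have "(\<Sum>i\<in>V. if i \<in> e then 2 * t * r i + t^2 else 0) = (\<Sum>i\<in>{i\<in>V. i \<in> e}. 2 * t * r i + t^2)"
      unfolding V_def by (simp only: sum.inter_filter[OF finite_atLeastAtMost])
    also have "{i\<in>V. i \<in> e} = {u, v}" using e by auto
    also have "(\<Sum>i\<in>{u, v}. 2 * t * r i + t^2) = 2 * t * (r u + r v) + 2 * t^2"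
      using e by (simp add: algebra_simps)
    finally show ?thesis by (simp only: add.assoc)
  qed
  have inX: "x(e := x e + t) \<in> X" if "e \<in> E" "0 \<le> x e + t" "x e + t \<le> B" for e t
  proof -
    have h: "\<forall>e'. x e' \<in> Sb e'" using xX memX by blast
    have "\<forall>e'. (x(e := x e + t)) e' \<in> Sb e'"
    proof
      fix e'
      show "(x(e := x e + t)) e' \<in> Sb e'"
      proof (cases "e' = e")
        case True then show ?thesis using that unfolding Sb_def by simp
      next
        case False then show ?thesis using h by simp
      qed
    qed
    then show ?thesis using memX by blast
  qed
  have key1: "r u + r v \<ge> 0" and key2: "x e > 0 \<Longrightarrow> r u + r v \<le> 0"
    if e: "e \<in> E" "e = {u, v}" for e u v
  proof -
    have uv: "u \<noteq> v" "u \<in> V" "v \<in> V" using sg_edge2[OF sg] e unfolding V_def by blast+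
    define g where "g = r u + r v"
    show "r u + r v \<ge> 0"
    proof (rule ccontr)
      assume "\<not> ?thesis"
      then have gneg: "g < 0" unfolding g_def by simp
      have "x e < B"
      proof (rule ccontr)
        assume "\<not> x e < B"
        then have xeB: "x e = B" using x0[OF e(1)] by simp
        have "r w > 0" if w: "w \<in> e" "w \<in> V" for w
        proof -
          have "x e \<le> dsum E x w" unfolding dsum_def using fE x0 w e(1)
            by (intro member_le_sum) auto
          then show ?thesis using bleB[OF w(2)] xeB unfolding r_def by simp
        qed
        then have "g > 0" unfolding g_def using e uv by (simp add: add_pos_pos)
        then show False using gneg by simp
      qed
      define t where "t = min (- g / 2) (B - x e)"
      have t: "t > 0" "t \<le> - g / 2" "t \<le> B - x e" unfolding t_def using gneg \<open>x e < B\<close> by auto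
      have "F (x(e := x e + t)) = F x + 2 * t * (g + t)"
        using pert[OF e uv] unfolding g_def by (simp add: power2_eq_square algebra_simps)
      moreover have "2 * t * (g + t) < 0"
      proof -
        have "g + t < 0" "2 * t > 0" using t gneg by linarith+
        then show ?thesis by (simp add: mult_pos_neg)
      qed
      moreover have "F x \<le> F (x(e := x e + t))" using x0[OF e(1)] t by (intro xmin inX e(1)) auto
      ultimately show False by simp
    qed
    show "r u + r v \<le> 0" if xpos: "x e > 0"
    proof (rule ccontr)
      assume "\<not> ?thesis"
      then have gpos: "g > 0" unfolding g_def by simp
      define t where "t = - min (g / 2) (x e)"
      have t: "t < 0" "- t \<le> g / 2" "- t \<le> x e" unfolding t_def using gpos xpos by auto
      have "F (x(e := x e + t)) = F x + 2 * t * (g + t)"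
        using pert[OF e uv] unfolding g_def by (simp add: power2_eq_square algebra_simps)
      moreover have "2 * t * (g + t) < 0"
      proof -
        have "g + t > 0" "2 * t < 0" using t gpos by linarith+
        then show ?thesis by (simp add: mult_neg_pos)
      qed
      moreover have "F x \<le> F (x(e := x e + t))" using x0[OF e(1)] t by (intro xmin inX e(1)) auto
      ultimately show False by simp
    qed
  qed
  have orth: "(\<Sum>i\<in>V. r i * dsum E x i) = 0"
  proof -
    have "(\<Sum>i\<in>V. r i * dsum E x i) = (\<Sum>e\<in>E. x e * (\<Sum>i\<in>{i\<in>V. i \<in> e}. r i))"
      unfolding V_def using fE by (intro sumH) auto
    also have "\<dots> = (\<Sum>e\<in>E. (0::real))"
    proof (rule sum.cong[OF refl])
      fix e assume e: "e \<in> E"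
      then obtain u v where uv: "e = {u, v}" "u \<noteq> v" "u \<in> V" "v \<in> V"
        using sg_edge[OF sg] unfolding V_def by blast
      have "{i\<in>V. i \<in> e} = {u, v}" using uv by auto
      then have s: "(\<Sum>i\<in>{i\<in>V. i \<in> e}. r i) = r u + r v" using uv by simp
      show "x e * (\<Sum>i\<in>{i\<in>V. i \<in> e}. r i) = 0"
      proof (cases "x e > 0")
        case True
        then show ?thesis using key1[OF e uv(1)] key2[OF e uv(1)] s by simp
      next
        case False
        then show ?thesis using x0[OF e] by simp
      qed
    qed
    finally show ?thesis by simp
  qed
  have "0 \<le> (\<Sum>i\<in>{1..n}. b i * r i)"
    by (rule layer2[OF sg _ hall]) (use bpos key1 in \<open>auto simp: less_imp_le\<close>)
  moreover have "(\<Sum>i\<in>V. (r i)^2) = (\<Sum>i\<in>V. r i * dsum E x i) - (\<Sum>i\<in>V. b i * r i)"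
  proof -
    have "(\<Sum>i\<in>V. (r i)^2) = (\<Sum>i\<in>V. r i * dsum E x i - b i * r i)"
      by (intro sum.cong) (auto simp: r_def power2_eq_square algebra_simps)
    then show ?thesis by (simp add: sum_subtractf)
  qed
  ultimately have "(\<Sum>i\<in>V. (r i)^2) \<le> 0" using orth unfolding V_def by simp
  then have "\<forall>i\<in>V. (r i)^2 = 0"
    using sum_nonneg_eq_0_iff[of V "\<lambda>i. (r i)^2"] unfolding V_def
    by (smt (verit, del_insts) finite_atLeastAtMost sum_nonneg zero_le_power2)
  then have "\<forall>i\<in>V. dsum E x i = b i" unfolding r_def by simp
  then show ?thesis using x0 unfolding V_def by blast
qed



lemma card_le:
  assumes sg: "simple_graph n E" and st: "stable E S" and e: "e \<in> E"
  shows "card {i\<in>S. i \<in> e} \<le> card {i\<in>ext_nbhd n E S. i \<in> e}"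
  using cardcases[OF sg st e] by auto

lemma card_eq1:
  assumes sg: "simple_graph n E" and S: "S \<in> S1 n E" and e: "e \<in> E"
  shows "card {i\<in>S. i \<in> e} = card {i\<in>ext_nbhd n E S. i \<in> e}"
proof -
  have st: "stable E S" using S unfolding S1_def by blast
  obtain p q where pq: "e = {p, q}" using sg_edge[OF sg e] by blast
  have "p \<in> S \<or> q \<in> S" using S e pq unfolding S1_def by blast
  then have "{i\<in>S. i \<in> e} \<noteq> {}" using pq by auto
  moreover have "finite {i\<in>S. i \<in> e}" using pq by auto
  ultimately have "card {i\<in>S. i \<in> e} \<noteq> 0" by simp
  then show ?thesis using cardcases[OF sg st e] by auto
qed

lemma small_pos:
  fixes Q :: "real set"
  assumes "finite Q" "\<forall>q\<in>Q. q > 0"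
  shows "\<exists>d>0. \<forall>q\<in>Q. d \<le> q"
  using assms
proof (induction Q rule: finite_induct)
  case empty
  then show ?case by (rule_tac x=1 in exI) auto
next
  case (insert a F)
  then obtain d where "d > 0" "\<forall>q\<in>F. d \<le> q" by auto
  then show ?case using insert by (rule_tac x="min d a" in exI) auto
qed

lemma prodpos:
  assumes sg: "simple_graph n E" and e: "e \<in> E" and c: "\<forall>i\<in>{1..n}. c i > (0::real)"
  shows "prod c e > 0"
proof -
  obtain p q where pq: "e = {p, q}" "p \<noteq> q" "p \<in> {1..n}" "q \<in> {1..n}" using sg_edge[OF sg e] by blast
  then show ?thesis using c by simp
qed

lemma posex:
  fixes b :: "nat \<Rightarrow> real"
  assumes sg: "simple_graph n E" and bpos: "\<forall>i\<in>{1..n}. b i > 0"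
    and s1: "\<forall>S\<in>S1 n E. sum b S = sum b (ext_nbhd n E S)"
    and s2: "\<forall>S\<in>S2 n E. sum b S < sum b (ext_nbhd n E S)"
  shows "\<exists>x. (\<forall>e\<in>E. x e > 0) \<and> (\<forall>i\<in>{1..n}. dsum E x i = b i)"
proof -
  have fE: "finite E" using sg_finite[OF sg] .
  define V where "V = {1..n}"
  define Q where "Q = b ` V \<union> (\<lambda>S. sum b (ext_nbhd n E S) - sum b S) ` S2 n E"
  have "S2 n E \<subseteq> Pow V" unfolding S2_def V_def by auto
  moreover have "finite (Pow V)" unfolding V_def by simp
  ultimately have "finite (S2 n E)" using finite_subset by blast
  then have "finite Q" unfolding Q_def V_def by simp
  moreover have "\<forall>q\<in>Q. q > 0" unfolding Q_def V_def using bpos s2 by auto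
  ultimately obtain \<delta> where d: "\<delta> > 0" "\<forall>q\<in>Q. \<delta> \<le> q" using small_pos by blast
  define d1 where "d1 = dsum E (\<lambda>_. 1)"
  have d1nn: "\<And>i. d1 i \<ge> 0" unfolding d1_def dsum_def by (simp add: sum_nonneg)
  define K where "K = sum d1 V"
  have Knn: "K \<ge> 0" unfolding K_def using d1nn by (simp add: sum_nonneg)
  have d1K: "\<And>i. i \<in> V \<Longrightarrow> d1 i \<le> K" unfolding K_def V_def using d1nn
    by (intro member_le_sum) auto
  define \<epsilon> where "\<epsilon> = \<delta> / (2 * (K + 1))"
  have epos: "\<epsilon> > 0" unfolding \<epsilon>_def using d Knn by simp
  have eK: "\<epsilon> * K \<le> \<delta> / 2"
  proof -
    have "\<epsilon> * K \<le> \<epsilon> * (K + 1)" using epos by simp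
    also have "\<epsilon> * (K + 1) = \<delta> / 2" unfolding \<epsilon>_def using Knn by (simp add: field_simps)
    finally show ?thesis .
  qed
  have deps: "\<And>i. dsum E (\<lambda>_. \<epsilon>) i = \<epsilon> * d1 i" unfolding d1_def dsum_def by simp
  define b' where "b' = (\<lambda>i. b i - \<epsilon> * d1 i)"
  have b'pos: "\<forall>i\<in>{1..n}. b' i > 0"
  proof
    fix i assume i: "i \<in> {1..n}"
    have "\<epsilon> * d1 i \<le> \<epsilon> * K" using d1K[of i] i epos unfolding V_def by simp
    moreover have "\<delta> \<le> b i" using d i unfolding Q_def V_def by auto
    ultimately show "b' i > 0" unfolding b'_def using eK d by linarith
  qed
  have sb': "\<And>A. sum b' A = sum b A - \<epsilon> * sum d1 A" unfolding b'_def by (simp add: sum_subtractf sum_distrib_left)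
  have hall: "\<forall>S. S \<subseteq> {1..n} \<longrightarrow> S \<noteq> {} \<longrightarrow> stable E S \<longrightarrow> sum b' S \<le> sum b' (ext_nbhd n E S)"
  proof (intro allI impI)
    fix S assume S: "S \<subseteq> {1..n}" "S \<noteq> {}" "stable E S"
    have fS: "finite S" using S(1) finite_subset by blast
    have NV: "ext_nbhd n E S \<subseteq> V" unfolding ext_nbhd_def V_def by auto
    have fN: "finite (ext_nbhd n E S)" using NV finite_subset unfolding V_def by blast
    show "sum b' S \<le> sum b' (ext_nbhd n E S)"
    proof (cases "S \<in> S1 n E")
      case True
      have "sum d1 S = sum d1 (ext_nbhd n E S)"
        unfolding d1_def using sumS[OF fS fE] sumS[OF fN fE] card_eq1[OF sg True] by simp
      then show ?thesis using s1 True sb' by simp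
    next
      case False
      then have S2: "S \<in> S2 n E" using S unfolding S1_def S2_def by blast
      have "\<delta> \<le> sum b (ext_nbhd n E S) - sum b S" using d S2 unfolding Q_def by auto
      moreover have "sum d1 (ext_nbhd n E S) \<le> K" unfolding K_def
        using NV d1nn by (intro sum_mono2) (auto simp: V_def)
      moreover have "0 \<le> sum d1 S" using d1nn by (simp add: sum_nonneg)
      moreover have "\<epsilon> * sum d1 (ext_nbhd n E S) \<le> \<epsilon> * K" using calculation(2) epos by simp
      moreover have "0 \<le> \<epsilon> * sum d1 S" using calculation(3) epos by simp
      ultimately show ?thesis using sb'[of S] sb'[of "ext_nbhd n E S"] eK d by linarith
    qed
  qed
  obtain x' where x': "\<forall>e\<in>E. x' e \<ge> 0" "\<forall>i\<in>{1..n}. dsum E x' i = b' i"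
    using core[OF sg b'pos hall] by blast
  define x where "x = (\<lambda>e. x' e + \<epsilon>)"
  have "\<forall>e\<in>E. x e > 0" unfolding x_def using x'(1) epos by (simp add: add_nonneg_pos)
  moreover have "\<forall>i\<in>{1..n}. dsum E x i = b i"
  proof
    fix i assume i: "i \<in> {1..n}"
    have "dsum E x i = dsum E x' i + dsum E (\<lambda>_. \<epsilon>) i" unfolding x_def dsum_def by (simp add: sum.distrib)
    then show "dsum E x i = b i" using x'(2) i deps unfolding b'_def by simp
  qed
  ultimately show ?thesis by blast
qed

theorem theorem1:
  fixes n :: nat and E :: "nat set set" and c :: "nat \<Rightarrow> real" and \<rho> :: real
  assumes "simple_graph n E" and "connected_graph n E"
    and "\<forall>i\<in>{1..n}. c i > 0" and "\<rho> > 0"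
  shows "(\<exists>w :: nat set \<Rightarrow> real. (\<forall>e\<in>E. w e > 0) \<and>
            (\<forall>i\<in>{1..n}. (\<Sum>j=1..n. wadj E w i j * c j) = \<rho> * c i))
         \<longleftrightarrow>
         ((\<forall>S\<in>S1 n E. (\<Sum>j\<in>S. (c j)\<^sup>2) = (\<Sum>j\<in>ext_nbhd n E S. (c j)\<^sup>2)) \<and>
          (\<forall>S\<in>S2 n E. (\<Sum>j\<in>S. (c j)\<^sup>2) < (\<Sum>j\<in>ext_nbhd n E S. (c j)\<^sup>2)))"
proof -
  note sg = assms(1) and cg = assms(2) and cpos = assms(3) and rpos = assms(4)
  have fE: "finite E" using sg_finite[OF sg] .
  define b where "b = (\<lambda>i. \<rho> * (c i)^2)"
  have sb: "\<And>A. sum b A = \<rho> * (\<Sum>j\<in>A. (c j)^2)" unfolding b_def by (simp add: sum_distrib_left)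
  show ?thesis
  proof
    assume "\<exists>w :: nat set \<Rightarrow> real. (\<forall>e\<in>E. w e > 0) \<and>
            (\<forall>i\<in>{1..n}. (\<Sum>j=1..n. wadj E w i j * c j) = \<rho> * c i)"
    then obtain w where wpos: "\<forall>e\<in>E. w e > 0"
      and weq: "\<forall>i\<in>{1..n}. (\<Sum>j=1..n. wadj E w i j * c j) = \<rho> * c i" by blast
    define x where "x = (\<lambda>e. w e * prod c e)"
    have xpos: "\<forall>e\<in>E. x e > 0" unfolding x_def using wpos prodpos[OF sg _ cpos] by simp
    have dx: "dsum E x i = b i" if i: "i \<in> {1..n}" for i
    proof -
      have "dsum E x i = (\<Sum>j=1..n. wadj E w i j * c j) * c i" unfolding x_def using conv[OF sg i] by simp
      also have "\<dots> = \<rho> * c i * c i" using weq i by simp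
      finally show ?thesis unfolding b_def by (simp add: power2_eq_square)
    qed
    have sums: "\<And>A. A \<subseteq> {1..n} \<Longrightarrow> sum b A = (\<Sum>e\<in>E. real (card {i\<in>A. i \<in> e}) * x e)"
    proof -
      fix A assume A: "A \<subseteq> {1..n}"
      then have fA: "finite A" using finite_subset by blast
      have "sum b A = (\<Sum>i\<in>A. dsum E x i)" using dx A by (intro sum.cong) auto
      then show "sum b A = (\<Sum>e\<in>E. real (card {i\<in>A. i \<in> e}) * x e)" using sumS[OF fA fE] by simp
    qed
    have NV: "\<And>S. ext_nbhd n E S \<subseteq> {1..n}" unfolding ext_nbhd_def by auto
    show "(\<forall>S\<in>S1 n E. (\<Sum>j\<in>S. (c j)\<^sup>2) = (\<Sum>j\<in>ext_nbhd n E S. (c j)\<^sup>2)) \<and>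
          (\<forall>S\<in>S2 n E. (\<Sum>j\<in>S. (c j)\<^sup>2) < (\<Sum>j\<in>ext_nbhd n E S. (c j)\<^sup>2))"
    proof (intro conjI ballI)
      fix S assume S: "S \<in> S1 n E"
      have SV: "S \<subseteq> {1..n}" using S unfolding S1_def by blast
      have "sum b S = sum b (ext_nbhd n E S)"
        using sums[OF SV] sums[OF NV] card_eq1[OF sg S] by simp
      then show "(\<Sum>j\<in>S. (c j)\<^sup>2) = (\<Sum>j\<in>ext_nbhd n E S. (c j)\<^sup>2)" using sb rpos by simp
    next
      fix S assume S: "S \<in> S2 n E"
      have SV: "S \<subseteq> {1..n}" and st: "stable E S" using S unfolding S2_def by blast+
      obtain a b0 where ab: "{a, b0} \<in> E" "a \<in> ext_nbhd n E S" "b0 \<notin> S"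
        using conn_edge[OF sg cg S] by blast
      have aS: "a \<notin> S" using ab(2) unfolding ext_nbhd_def by blast
      have "(\<Sum>e\<in>E. real (card {i\<in>S. i \<in> e}) * x e) < (\<Sum>e\<in>E. real (card {i\<in>ext_nbhd n E S. i \<in> e}) * x e)"
      proof (rule sum_strict_mono_ex1[OF fE])
        show "\<forall>e\<in>E. real (card {i\<in>S. i \<in> e}) * x e \<le> real (card {i\<in>ext_nbhd n E S. i \<in> e}) * x e"
          using card_le[OF sg st] xpos by (simp add: less_imp_le mult_right_mono)
        have e0: "{i\<in>S. i \<in> {a, b0}} = {}" using aS ab(3) by auto
        have c0: "card {i\<in>S. i \<in> {a, b0}} = 0" by (simp only: e0 card.empty)
        have c1: "card {i\<in>ext_nbhd n E S. i \<in> {a, b0}} > 0"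
        proof -
          have "a \<in> {i\<in>ext_nbhd n E S. i \<in> {a, b0}}" using ab(2) by simp
          moreover have "finite {i\<in>ext_nbhd n E S. i \<in> {a, b0}}" by simp
          ultimately show ?thesis by (metis card_gt_0_iff empty_iff)
        qed
        have xp: "x {a, b0} > 0" using xpos ab(1) by blast
        have "real (card {i\<in>S. i \<in> {a, b0}}) * x {a, b0} < real (card {i\<in>ext_nbhd n E S. i \<in> {a, b0}}) * x {a, b0}"
          unfolding c0 using c1 xp by simp
        then show "\<exists>e\<in>E. real (card {i\<in>S. i \<in> e}) * x e < real (card {i\<in>ext_nbhd n E S. i \<in> e}) * x e"
          using ab(1) by blast
      qed
      then have "sum b S < sum b (ext_nbhd n E S)" using sums[OF SV] sums[OF NV] by simp
      then show "(\<Sum>j\<in>S. (c j)\<^sup>2) < (\<Sum>j\<in>ext_nbhd n E S. (c j)\<^sup>2)" using sb rpos by simp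
    qed
  next
    assume R: "(\<forall>S\<in>S1 n E. (\<Sum>j\<in>S. (c j)\<^sup>2) = (\<Sum>j\<in>ext_nbhd n E S. (c j)\<^sup>2)) \<and>
          (\<forall>S\<in>S2 n E. (\<Sum>j\<in>S. (c j)\<^sup>2) < (\<Sum>j\<in>ext_nbhd n E S. (c j)\<^sup>2))"
    have bpos: "\<forall>i\<in>{1..n}. b i > 0" unfolding b_def using cpos rpos by (simp add: mult_pos_pos less_imp_neq[symmetric])
    have s1: "\<forall>S\<in>S1 n E. sum b S = sum b (ext_nbhd n E S)" using R sb by simp
    have s2: "\<forall>S\<in>S2 n E. sum b S < sum b (ext_nbhd n E S)" using R sb rpos by simp
    obtain x where xpos: "\<forall>e\<in>E. x e > 0" and dx: "\<forall>i\<in>{1..n}. dsum E x i = b i"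
      using posex[OF sg bpos s1 s2] by blast
    define w where "w = (\<lambda>e. x e / prod c e)"
    have "\<forall>e\<in>E. w e > 0" unfolding w_def using xpos prodpos[OF sg _ cpos] by simp
    moreover have "\<forall>i\<in>{1..n}. (\<Sum>j=1..n. wadj E w i j * c j) = \<rho> * c i"
    proof
      fix i assume i: "i \<in> {1..n}"
      have "dsum E (\<lambda>e. w e * prod c e) i = dsum E x i"
        unfolding dsum_def w_def using prodpos[OF sg _ cpos] by (intro sum.cong) (auto simp: less_imp_neq[symmetric])
      then have "(\<Sum>j=1..n. wadj E w i j * c j) * c i = \<rho> * c i * c i"
        using conv[OF sg i] dx i unfolding b_def by (simp add: power2_eq_square)
      then show "(\<Sum>j=1..n. wadj E w i j * c j) = \<rho> * c i" using cpos i by (simp add: less_imp_neq[symmetric])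
    qed
    ultimately show "\<exists>w :: nat set \<Rightarrow> real. (\<forall>e\<in>E. w e > 0) \<and>
            (\<forall>i\<in>{1..n}. (\<Sum>j=1..n. wadj E w i j * c j) = \<rho> * c i)" by blast
  qed
qed

end
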